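(* Let $\lambda\in\mathbb{R}$ with $\lambda\notin\Sigma_0$, and let $\psi_2$ be the solution on $[0,1]$ of $-a\psi''+q_0\psi=\lambda\psi$ with $\psi_2(0)-\rho\,\psi_2'(0)=0$ and $\psi_2(1)+\rho\,\psi_2'(1)=1$. Then $\psi_2'(0)\neq 0$, and $\lambda\in\bigcup_{\Theta\in[-\pi,\pi]^2}\sigma(\mathcal{A}^\Theta)$ (i.e. $\lambda\in\sigma(\mathcal A)$) if and only if there exists $(\theta_1,\theta_2)\in[-\pi,\pi]^2$ such that $$\frac{\psi_2'(1)}{\psi_2'(0)}-\frac{\lambda m}{3a\,\psi_2'(0)}=\pm\frac{|S(\theta_1,\theta_2)|}{3}$$ for one choice of the sign $\pm$.
   Context: Fix $a>0$, $\kappa^{-1}\ge 0$ and $m\ge 0$, and put $\rho:=a\kappa^{-1}\ge 0$. Let $q_0\in L^\infty(0,1)$ be real-valued and symmetric: $q_0(x)=q_0(1-x)$. The hexagonal lattice $G$ (all edges of length $1$, identified with $[0,1]$ by arc length; the potential on every edge is $q_0$, which is orientation-independent by symmetry) is periodic under $\mathbb{Z}b_1+\mathbb{Z}b_2$; a fundamental domain has two vertices $v_1,v_2$ and three edges $e_1,e_2,e_3$, each parametrized by $[0,1]$ from $v_1$ ($x=0$) to a translate of $v_2$ ($x=1$). The Hamiltonian $\mathcal{A}$ acts as $u_e\mapsto -au_e''+q_0u_e$ on edges, with vertex conditions at every vertex $v$ (with $\partial_n u_e(v)$ the outward derivative of $u_e$ at its endpoint $v$, i.e. $-u_e'(0)$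 at $x=0$ and $u_e'(1)$ at $x=1$): there is $\omega_v\in\mathbb{C}$ with $u_e(v)+\rho\,\partial_nu_e(v)=\omega_v$ for all edges $e\ni v$ (semi-rigidity), and $a\sum_{e\ni v}\partial_nu_e(v)=\lambda m\,\omega_v$ (net-force balance). By Floquet–Bloch theory $\sigma(\mathcal A)=\bigcup_{\Theta\in[-\pi,\pi]^2}\sigma(\mathcal A^\Theta)$, where for $\Theta=(\theta_1,\theta_2)$, a real $\lambda$ belongs to $\sigma(\mathcal{A}^\Theta)$ iff there exist $u_1,u_2,u_3\in H^2(0,1)$ and $\omega_0,\omega_1\in\mathbb{C}$, not all zero, with $-au_j''+q_0u_j=\lambda u_j$ ($j=1,2,3$) and $u_1(0)-\rho u_1'(0)=u_2(0)-\rho u_2'(0)=u_3(0)-\rho u_3'(0)=\omega_0$, $-a(u_1'(0)+u_2'(0)+u_3'(0))=\lambda m\,\omega_0$, $u_1(1)+\rho u_1'(1)=e^{i\theta_1}(u_2(1)+\rho u_2'(1))=e^{i\theta_2}(u_3(1)+\rho u_3'(1))=\omega_1$, $a(u_1'(1)+e^{i\theta_1}u_2'(1)+e^{i\theta_2}u_3'(1))=\lambda m\,\omega_1$. $S(\theta_1,\theta_2):=1+e^{-i\theta_1}+e^{-i\theta_2}$. $\Sigma_0$ is the set of $\lambda\in\mathbb{R}$ for which $-au''+q_0u=\lambda u$ on $(0,1)$ with $u(0)-\rho u'(0)=0$, $u(1)+\rho u'(1)=0$ has a nontrivial solution. *)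

theory Defs
  imports "HOL-Analysis.Analysis"
begin

text \<open>u (with derivative du) solves  -a u'' + q0 u = lam u  on [0,1] in the H^2 sense:
  u is differentiable on [0,1] with derivative du, and du is the indefinite
  integral of ((q0 - lam)/a) u, i.e. du is absolutely continuous with
  du'' = ((q0 - lam)/a) u almost everywhere.\<close>
definition is_sol :: "real \<Rightarrow> (real \<Rightarrow> real) \<Rightarrow> real \<Rightarrow> (real \<Rightarrow> complex) \<Rightarrow> (real \<Rightarrow> complex) \<Rightarrow> bool" where
  "is_sol a q0 lam u du \<longleftrightarrow>
     (\<forall>x\<in>{0..1}. (u has_vector_derivative du x) (at x within {0..1})) \<and>
     (\<forall>x\<in>{0..1}. ((\<lambda>t. complex_of_real ((q0 t - lam) / a) * u t) has_integral (du x - du 0)) {0..x})"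

text \<open>Sigma_0 (with rho = a kappa^{-1}).\<close>
definition Sigma0 :: "real \<Rightarrow> real \<Rightarrow> (real \<Rightarrow> real) \<Rightarrow> real set" where
  "Sigma0 a rho q0 = {lam. \<exists>u du. is_sol a q0 lam u du \<and>
       u 0 - complex_of_real rho * du 0 = 0 \<and> u 1 + complex_of_real rho * du 1 = 0 \<and>
       (\<exists>x\<in>{0..1}. u x \<noteq> 0)}"

definition S :: "real \<Rightarrow> real \<Rightarrow> complex" where
  "S th1 th2 = 1 + exp (- \<i> * complex_of_real th1) + exp (- \<i> * complex_of_real th2)"

definition in_spec_theta :: "real \<Rightarrow> real \<Rightarrow> real \<Rightarrow> (real \<Rightarrow> real) \<Rightarrow> real \<Rightarrow> real \<Rightarrow> real \<Rightarrow> bool" where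
  "in_spec_theta a rho m q0 th1 th2 lam \<longleftrightarrow>
     (\<exists>u1 du1 u2 du2 u3 du3 (w0::complex) (w1::complex).
        is_sol a q0 lam u1 du1 \<and> is_sol a q0 lam u2 du2 \<and> is_sol a q0 lam u3 du3 \<and>
        ((\<exists>x\<in>{0..1}. u1 x \<noteq> 0 \<or> u2 x \<noteq> 0 \<or> u3 x \<noteq> 0) \<or> w0 \<noteq> 0 \<or> w1 \<noteq> 0) \<and>
        u1 0 - complex_of_real rho * du1 0 = w0 \<and>
        u2 0 - complex_of_real rho * du2 0 = w0 \<and>
        u3 0 - complex_of_real rho * du3 0 = w0 \<and>
        - complex_of_real a * (du1 0 + du2 0 + du3 0) = complex_of_real (lam * m) * w0 \<and>
        u1 1 + complex_of_real rho * du1 1 = w1 \<and>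
        exp (\<i> * complex_of_real th1) * (u2 1 + complex_of_real rho * du2 1) = w1 \<and>
        exp (\<i> * complex_of_real th2) * (u3 1 + complex_of_real rho * du3 1) = w1 \<and>
        complex_of_real a * (du1 1 + exp (\<i> * complex_of_real th1) * du2 1
            + exp (\<i> * complex_of_real th2) * du3 1) = complex_of_real (lam * m) * w1)"

end

theory Submission
  imports Defs
begin

lemma ae_to_negl:
  assumes "AE x in lebesgue_on {0..1::real}. P x"
  shows "\<exists>N. negligible N \<and> (\<forall>x\<in>{0..1}-N. P x)"
proof -
  have "AE x in lebesgue. x \<in> {0..1} \<longrightarrow> P x"
    using assms by (subst (asm) AE_restrict_space_iff) auto
  then obtain N where N: "N \<in> null_sets lebesgue" "{x \<in> space lebesgue. \<not> (x \<in> {0..1} \<longrightarrow> P x)} \<subseteq> N"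
    unfolding eventually_ae_filter by blast
  then show ?thesis using negligible_iff_null_sets by (intro exI[of _ N]) auto
qed

lemma is_sol_lin:
  assumes "is_sol a q0 lam u du" "is_sol a q0 lam v dv"
  shows "is_sol a q0 lam (\<lambda>x. al * u x + be * v x) (\<lambda>x. al * du x + be * dv x)"
  unfolding is_sol_def
proof (intro conjI ballI)
  fix x :: real assume x: "x \<in> {0..1}"
  show "((\<lambda>x. al * u x + be * v x) has_vector_derivative al * du x + be * dv x) (at x within {0..1})"
    using assms x unfolding is_sol_def by (auto intro!: derivative_eq_intros)
  have "((\<lambda>t. al * (complex_of_real ((q0 t - lam) / a) * u t) + be * (complex_of_real ((q0 t - lam) / a) * v t))
     has_integral (al * (du x - du 0) + be * (dv x - dv 0))) {0..x}"
    using assms x unfolding is_sol_def by (intro has_integral_add has_integral_mult_right) auto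
  moreover have "(\<lambda>t. al * (complex_of_real ((q0 t - lam) / a) * u t) + be * (complex_of_real ((q0 t - lam) / a) * v t))
     = (\<lambda>t. complex_of_real ((q0 t - lam) / a) * (al * u t + be * v t))" by (simp add: fun_eq_iff algebra_simps add_divide_distrib diff_divide_distrib)
  moreover have "al * (du x - du 0) + be * (dv x - dv 0) = al * du x + be * dv x - (al * du 0 + be * dv 0)"
    by (simp add: algebra_simps)
  ultimately show "((\<lambda>t. complex_of_real ((q0 t - lam) / a) * (al * u t + be * v t)) has_integral
        (al * du x + be * dv x - (al * du 0 + be * dv 0))) {0..x}"
    by simp
qed

lemma zero_sol_deriv:
  assumes "is_sol a q0 lam u du" "\<forall>x\<in>{0..1}. u x = 0" "x \<in> {0..1}"
  shows "du x = 0"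
proof -
  have "(u has_vector_derivative du x) (at x within {0..1})" using assms unfolding is_sol_def by auto
  moreover have "(u has_vector_derivative 0) (at x within {0..1})"
    by (rule has_vector_derivative_transform[of x _ _ "\<lambda>_. 0"]) (use assms in auto)
  ultimately show ?thesis
    using vector_derivative_unique_within_closed_interval[of 0 1 x u "du x" 0] assms by auto
qed

lemma represent:
  fixes rho :: real and p1 dp1 p2 dp2 u du :: "real \<Rightarrow> complex"
  assumes ns: "lam \<notin> Sigma0 a rho q0"
    and p1: "is_sol a q0 lam p1 dp1" "p1 0 - complex_of_real rho * dp1 0 = 1" "p1 1 + complex_of_real rho * dp1 1 = 0"
    and p2: "is_sol a q0 lam p2 dp2" "p2 0 - complex_of_real rho * dp2 0 = 0" "p2 1 + complex_of_real rho * dp2 1 = 1"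
    and u: "is_sol a q0 lam u du"
  defines "al \<equiv> u 0 - complex_of_real rho * du 0" and "be \<equiv> u 1 + complex_of_real rho * du 1"
  shows "(\<forall>x\<in>{0..1}. u x = al * p1 x + be * p2 x) \<and> du 0 = al * dp1 0 + be * dp2 0 \<and> du 1 = al * dp1 1 + be * dp2 1"
proof -
  have s12: "is_sol a q0 lam (\<lambda>x. al * p1 x + be * p2 x) (\<lambda>x. al * dp1 x + be * dp2 x)"
    by (rule is_sol_lin[OF p1(1) p2(1)])
  have w: "is_sol a q0 lam (\<lambda>x. 1 * u x + (-1) * (al * p1 x + be * p2 x)) (\<lambda>x. 1 * du x + (-1) * (al * dp1 x + be * dp2 x))"
    by (rule is_sol_lin[OF u s12])
  have bc0: "1 * u 0 + (-1) * (al * p1 0 + be * p2 0) - rho * (1 * du 0 + (-1) * (al * dp1 0 + be * dp2 0)) = 0"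
  proof -
    have "1 * u 0 + (-1) * (al * p1 0 + be * p2 0) - rho * (1 * du 0 + (-1) * (al * dp1 0 + be * dp2 0))
       = (u 0 - complex_of_real rho * du 0) - al * (p1 0 - complex_of_real rho * dp1 0) - be * (p2 0 - complex_of_real rho * dp2 0)" by (simp add: algebra_simps)
    then show ?thesis using p1 p2 al_def by simp
  qed
  have bc1: "1 * u 1 + (-1) * (al * p1 1 + be * p2 1) + rho * (1 * du 1 + (-1) * (al * dp1 1 + be * dp2 1)) = 0"
  proof -
    have "1 * u 1 + (-1) * (al * p1 1 + be * p2 1) + rho * (1 * du 1 + (-1) * (al * dp1 1 + be * dp2 1))
       = (u 1 + complex_of_real rho * du 1) - al * (p1 1 + complex_of_real rho * dp1 1) - be * (p2 1 + complex_of_real rho * dp2 1)" by (simp add: algebra_simps)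
    then show ?thesis using p1 p2 be_def by simp
  qed
  have z: "\<forall>x\<in>{0..1}. 1 * u x + (-1) * (al * p1 x + be * p2 x) = 0"
    using ns w bc0 bc1 unfolding Sigma0_def by blast
  have "1 * du 0 + (-1) * (al * dp1 0 + be * dp2 0) = 0" "1 * du 1 + (-1) * (al * dp1 1 + be * dp2 1) = 0"
    using zero_sol_deriv[OF w z] by auto
  then show ?thesis using z by (auto simp: algebra_simps)
qed

lemma reflect_sol:
  fixes u du :: "real \<Rightarrow> complex"
  assumes sol: "is_sol a q0 lam u du" and N: "negligible N" "\<forall>x\<in>{0..1}-N. q0 x = q0 (1 - x)"
  shows "is_sol a q0 lam (\<lambda>x. u (1 - x)) (\<lambda>x. - du (1 - x))"
  unfolding is_sol_def
proof (intro conjI ballI)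
  fix x :: real assume x: "x \<in> {0..1}"
  have d1: "((\<lambda>x. 1 - x) has_vector_derivative (-1)) (at x within {0..1})"
    by (auto intro!: derivative_eq_intros)
  have im: "(\<lambda>x. 1 - x) ` {0..1::real} = {0..1}" by simp
  have d2: "(u has_vector_derivative du (1 - x)) (at (1 - x) within (\<lambda>x. 1 - x) ` {0..1})"
    using sol x unfolding is_sol_def im by auto
  show "((\<lambda>x. u (1 - x)) has_vector_derivative - du (1 - x)) (at x within {0..1})"
    using vector_diff_chain_within[OF d1 d2] by (simp add: o_def)
next
  fix x :: real assume x: "x \<in> {0..1}"
  define g where "g t = complex_of_real ((q0 t - lam) / a) * u t" for t
  have gI: "\<And>y. y \<in> {0..1} \<Longrightarrow> (g has_integral (du y - du 0)) {0..y}"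
    using sol unfolding is_sol_def g_def by auto
  have "g integrable_on {0..1}" using gI[of 1] by auto
  then have "g integrable_on {1-x..1}" by (rule integrable_subinterval_real) (use x in auto)
  then obtain J where J: "(g has_integral J) {1-x..1}" by blast
  have comb: "(g has_integral ((du (1-x) - du 0) + J)) {0..1}"
    by (rule has_integral_combine[OF _ _ gI[of "1-x"] J]) (use x in auto)
  have "(du (1-x) - du 0) + J = du 1 - du 0" using has_integral_unique[OF comb gI[of 1]] by simp
  then have Jv: "J = - du (1 - x) - - du (1 - 0)" by (simp add: algebra_simps)
  have "((\<lambda>s. g (1 *\<^sub>R s + 1)) has_integral (J /\<^sub>R 1 ^ DIM(real)))
           (cbox ((1-x - 1) /\<^sub>R 1) ((1 - 1) /\<^sub>R 1))"
    by (rule has_integral_affinity') (use J in auto)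
  then have "((\<lambda>s. g (s + 1)) has_integral J) {-x..0}" by simp
  then have "((\<lambda>s. g (- s + 1)) has_integral J) {-0..-(-x)}"
    by (subst has_integral_reflect_real[of "\<lambda>s. g (s + 1)"]) simp
  then have h: "((\<lambda>s. g (1 - s)) has_integral J) {0..x}" by simp
  show "((\<lambda>t. complex_of_real ((q0 t - lam) / a) * u (1 - t)) has_integral - du (1 - x) - - du (1 - 0)) {0..x}"
    unfolding Jv[symmetric]
  proof (rule has_integral_spike[OF N(1) _ h])
    fix t assume "t \<in> {0..x} - N"
    then have "q0 t = q0 (1 - t)" using N(2) x by auto
    then show "complex_of_real ((q0 t - lam) / a) * u (1 - t) = g (1 - t)" unfolding g_def by simp
  qed
qed

lemma norm_int_bound:
  fixes f :: "real \<Rightarrow> 'a::banach"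
  assumes "(f has_integral i) T" "(g has_integral j) T" "\<And>x. x \<in> T \<Longrightarrow> norm (f x) \<le> g x"
  shows "norm i \<le> j"
  using integral_norm_bound_integral[of f T g] assms integral_unique by (metis has_integral_integrable)

lemma exp_int:
  fixes L G x :: real
  assumes "L > 0" "x \<ge> 0"
  shows "((\<lambda>t. G * exp (2*L*t)) has_integral (G * (exp (2*L*x) - 1) / (2*L))) {0..x}"
proof -
  have "((\<lambda>t. G * exp (2*L*t) / (2*L)) has_vector_derivative G * exp (2*L*t)) (at t within {0..x})" for t
    using assms unfolding has_real_derivative_iff_has_vector_derivative[symmetric]
    by (auto intro!: derivative_eq_intros)
  from fundamental_theorem_of_calculus[OF assms(2) this]
  show ?thesis by (simp add: diff_divide_distrib right_diff_distrib)
qed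

lemma uniq:
  fixes u du :: "real \<Rightarrow> complex"
  assumes a: "a > 0" and sol: "is_sol a q0 lam u du" and z: "u 0 = 0" "du 0 = 0"
    and N: "negligible N" "\<forall>x\<in>{0..1}-N. \<bar>q0 x\<bar> \<le> B"
  shows "\<forall>x\<in>{0..1}. u x = 0 \<and> du x = 0"
proof -
  define c where "c t = complex_of_real ((q0 t - lam)/a)" for t
  define K where "K = (\<bar>B\<bar> + \<bar>lam\<bar>)/a"
  define L where "L = 1 + K"
  have K0: "K \<ge> 0" using a by (simp add: K_def)
  have L0: "L > 0" using K0 by (simp add: L_def)
  have cK: "norm (c t) \<le> K" if "t \<in> {0..1} - N" for t
  proof -
    have "\<bar>q0 t - lam\<bar> \<le> \<bar>B\<bar> + \<bar>lam\<bar>" using N(2) that by (smt (verit) DiffI)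
    then have "\<bar>(q0 t - lam)/a\<bar> \<le> K" using a by (simp add: K_def abs_divide divide_right_mono)
    then show ?thesis unfolding c_def norm_of_real .
  qed
  have der: "\<And>x. x\<in>{0..1} \<Longrightarrow> (u has_vector_derivative du x) (at x within {0..1})"
    using sol unfolding is_sol_def by auto
  have intg: "\<And>x. x\<in>{0..1} \<Longrightarrow> ((\<lambda>t. c t * u t) has_integral du x) {0..x}"
    using sol z by (simp add: is_sol_def c_def)
  have cu: "continuous_on {0..1} u" by (rule continuous_on_vector_derivative) (use der in auto)
  have "(\<lambda>t. c t * u t) integrable_on {0..1}" using intg[of 1] by auto
  then have ci: "continuous_on {0..1} (\<lambda>x. integral {0..x} (\<lambda>t. c t * u t))" by (rule indefinite_integral_continuous_1)
  have ie: "\<And>x. x\<in>{0..1} \<Longrightarrow> integral {0..x} (\<lambda>t. c t * u t) = du x" using intg integral_unique by blast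
  have cdu: "continuous_on {0..1} du" using continuous_on_cong[THEN iffD1, OF refl _ ci] ie by auto
  define f where "f x = (norm (u x) + norm (du x)) * exp (-(2*L*x))" for x
  have cf: "continuous_on {0..1} f" unfolding f_def using cu cdu by (intro continuous_intros)
  obtain x0 where x0: "x0 \<in> {0..1}" "\<forall>y\<in>{0..1}. f y \<le> f x0"
    using continuous_attains_sup[of "{0..1}" f] cf by auto
  define G where "G = f x0"
  have G0: "G \<ge> 0" unfolding G_def f_def by simp
  have bnd: "norm (u t) \<le> G * exp (2*L*t) \<and> norm (du t) \<le> G * exp(2*L*t)" if "t\<in>{0..1}" for t
  proof -
    have "(norm (u t) + norm (du t)) * exp (-(2*L*t)) \<le> G" using x0 that by (auto simp: f_def G_def)
    then have "norm (u t) + norm (du t) \<le> G * exp (2*L*t)"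
      by (simp add: exp_minus field_simps)
    then show ?thesis by (smt (verit) norm_ge_zero)
  qed
  have key: "f x \<le> G/2" if x: "x \<in> {0..1}" for x
  proof -
    have sub: "{0..x} \<subseteq> {0..1}" using x by auto
    have E: "((\<lambda>t. G * exp (2*L*t)) has_integral (G * (exp (2*L*x) - 1) / (2*L))) {0..x}"
      using exp_int L0 x by auto
    have "(du has_integral (u x - u 0)) {0..x}"
    proof (rule fundamental_theorem_of_calculus)
      show "0 \<le> x" using x by auto
      fix t assume "t \<in> {0..x}"
      then have "t \<in> {0..1}" using sub by auto
      from has_vector_derivative_within_subset[OF der[OF this] sub]
      show "(u has_vector_derivative du t) (at t within {0..x})" .
    qed
    then have nu: "norm (u x) \<le> G * (exp (2*L*x) - 1) / (2*L)"
    proof -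
      assume H: "(du has_integral (u x - u 0)) {0..x}"
      show ?thesis
        using norm_int_bound[OF H E] bnd sub z by auto
    qed
    have EK: "((\<lambda>t. K * (G * exp (2*L*t))) has_integral K * (G * (exp (2*L*x) - 1) / (2*L))) {0..x}"
      using has_integral_mult_right[OF E] .
    define h where "h t = (if t \<in> N then 0 else c t * u t)" for t
    have "(h has_integral du x) {0..x}"
      by (rule has_integral_spike[OF N(1) _ intg[OF x]]) (simp add: h_def)
    then have ndu: "norm (du x) \<le> K * (G * (exp (2*L*x) - 1) / (2*L))"
    proof (rule norm_int_bound[OF _ EK])
      fix t assume t: "t \<in> {0..x}"
      show "norm (h t) \<le> K * (G * exp (2*L*t))"
      proof (cases "t \<in> N")
        case True then show ?thesis using K0 G0 by (simp add: h_def)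
      next
        case False then have "norm (h t) = norm (c t) * norm (u t)" by (simp add: h_def norm_mult)
        also have "\<dots> \<le> K * (G*exp(2*L*t))"
          using cK[of t] bnd[of t] t sub False K0 by (intro mult_mono) auto
        finally show ?thesis .
      qed
    qed
    have "norm (u x) + norm (du x) \<le> (1+K) * (G * (exp (2*L*x) - 1) / (2*L))"
    proof -
      have "(1+K) * (G * (exp (2*L*x) - 1) / (2*L)) = G * (exp (2*L*x) - 1) / (2*L) + K * (G * (exp (2*L*x) - 1) / (2*L))"
        by (simp add: algebra_simps add_divide_distrib[symmetric] diff_divide_distrib[symmetric])
      then show ?thesis using nu ndu by linarith
    qed
    also have "\<dots> = G * (exp (2*L*x) - 1) / 2" using L0 unfolding L_def by (simp add: field_simps)
    finally have s: "norm (u x) + norm (du x) \<le> G * (exp (2*L*x) - 1) / 2" .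
    have "f x \<le> G * (exp (2*L*x) - 1) / 2 * exp (-(2*L*x))"
      unfolding f_def by (rule mult_right_mono[OF s]) simp
    also have "\<dots> = G/2 * (1 - exp (-(2*L*x)))" by (simp add: exp_minus field_simps)
    also have "\<dots> \<le> G/2" using G0 by (simp add: mult_left_le)
    finally show ?thesis .
  qed
  have "G \<le> G/2" using key[OF x0(1)] G_def by simp
  then have "G = 0" using G0 by simp
  then have "f x \<le> 0" if "x \<in> {0..1}" for x using x0 that G_def by auto
  then show ?thesis unfolding f_def
    by (smt (verit, best) exp_gt_zero mult_le_0_iff norm_ge_zero norm_le_zero_iff)
qed

lemma alg0:
  fixes a d0 d1 w0 w1 f1 f2 lm :: complex
  shows "(-a*((-w0*d1 + w1*d0) + (-w0*d1 + w1*f1*d0) + (-w0*d1 + w1*f2*d0)) = lm*w0) \<longleftrightarrow>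
         ((3*a*d1 - lm)*w0 = a*d0*(1+f1+f2)*w1)"
proof -
  have "-a*((-w0*d1 + w1*d0) + (-w0*d1 + w1*f1*d0) + (-w0*d1 + w1*f2*d0)) - lm*w0
      = (3*a*d1 - lm)*w0 - a*d0*(1+f1+f2)*w1" by (simp add: algebra_simps)
  then show ?thesis by (metis eq_iff_diff_eq_0)
qed

lemma alg1:
  fixes a d0 d1 w0 w1 e1 e2 f1 f2 lm :: complex
  assumes "e1*f1 = 1" "e2*f2 = 1"
  shows "(a*((-w0*d0 + w1*d1) + e1*(-w0*d0 + w1*f1*d1) + e2*(-w0*d0 + w1*f2*d1)) = lm*w1) \<longleftrightarrow>
         ((3*a*d1 - lm)*w1 = a*d0*(1+e1+e2)*w0)"
proof -
  have "a*((-w0*d0 + w1*d1) + e1*(-w0*d0 + w1*f1*d1) + e2*(-w0*d0 + w1*f2*d1)) - lm*w1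
      = ((3*a*d1 - lm)*w1 - a*d0*(1+e1+e2)*w0) + a*w1*d1*((e1*f1 - 1) + (e2*f2 - 1))"
    by (simp add: algebra_simps)
  then have "a*((-w0*d0 + w1*d1) + e1*(-w0*d0 + w1*f1*d1) + e2*(-w0*d0 + w1*f2*d1)) - lm*w1
      = ((3*a*d1 - lm)*w1 - a*d0*(1+e1+e2)*w0)" using assms by simp
  then show ?thesis by (metis eq_iff_diff_eq_0)
qed

lemma quad:
  fixes P A SS :: complex
  assumes A0: "A \<noteq> 0"
  shows "(\<exists>w0 w1. (w0\<noteq>0 \<or> w1\<noteq>0) \<and> P*w0 = A*SS*w1 \<and> P*w1 = A*cnj SS*w0) \<longleftrightarrow>
         (\<exists>s\<in>{1::real,-1}. P = of_real s * A * of_real (cmod SS))"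
proof
  have nsq: "SS * cnj SS = (of_real (cmod SS))^2" using complex_norm_square by simp
  have sq: "A*SS*(A*cnj SS*w) = (A* of_real (cmod SS))^2 * w" for w
  proof -
    have "A*SS*(A*cnj SS*w) = A^2*(SS*cnj SS)*w" by (simp add: power2_eq_square algebra_simps)
    also have "\<dots> = (A* of_real (cmod SS))^2 * w" unfolding nsq by (simp add: power_mult_distrib)
    finally show ?thesis .
  qed
  {
    assume "\<exists>w0 w1. (w0\<noteq>0 \<or> w1\<noteq>0) \<and> P*w0 = A*SS*w1 \<and> P*w1 = A*cnj SS*w0"
    then obtain w0 w1 where nz: "w0\<noteq>0 \<or> w1\<noteq>0" and e0: "P*w0 = A*SS*w1" and e1: "P*w1 = A*cnj SS*w0" by blast
    have q0: "P^2*w0 = (A* of_real (cmod SS))^2 * w0"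
    proof -
      have "P^2*w0 = A*SS*(P*w1)" using e0 by (simp add: power2_eq_square algebra_simps)
      also have "\<dots> = A*SS*(A*cnj SS*w0)" using e1 by simp
      finally show ?thesis using sq by simp
    qed
    have q1: "P^2*w1 = (A* of_real (cmod SS))^2 * w1"
    proof -
      have "P^2*w1 = A*cnj SS*(P*w0)" using e1 by (simp add: power2_eq_square algebra_simps)
      also have "\<dots> = A*cnj SS*(A*SS*w1)" using e0 by simp
      also have "\<dots> = A*SS*(A*cnj SS*w1)" by (simp add: algebra_simps)
      finally show ?thesis using sq by simp
    qed
    have "P^2 = (A* of_real (cmod SS))^2" using nz q0 q1 by auto
    then have "P = A* of_real (cmod SS) \<or> P = - (A* of_real (cmod SS))" by (simp add: power2_eq_iff)
    then show "\<exists>s\<in>{1::real,-1}. P = of_real s * A * of_real (cmod SS)" by auto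
  }
  {
    assume "\<exists>s\<in>{1::real,-1}. P = of_real s * A * of_real (cmod SS)"
    then obtain s where s: "s \<in> {1::real,-1}" "P = of_real s * A * of_real (cmod SS)" by blast
    have P2: "P*P = A*SS*(A*cnj SS)"
    proof -
      have "P*P = (of_real s)^2 * (A * of_real (cmod SS))^2" using s(2) by (simp add: power2_eq_square algebra_simps)
      also have "\<dots> = (A * of_real (cmod SS))^2" using s(1) by auto
      also have "\<dots> = A*SS*(A*cnj SS*1)" using sq[of 1] by simp
      finally show ?thesis by simp
    qed
    show "\<exists>w0 w1. (w0\<noteq>0 \<or> w1\<noteq>0) \<and> P*w0 = A*SS*w1 \<and> P*w1 = A*cnj SS*w0"
    proof (cases "SS = 0")
      case True
      then have "P = 0" using s by simp
      then show ?thesis using True by (intro exI[of _ 1] exI[of _ 0]) simp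
    next
      case False
      show ?thesis
        by (rule exI[of _ "A*SS"], rule exI[of _ P]) (use False A0 P2 in \<open>auto simp: algebra_simps\<close>)
    qed
  }
qed

theorem mainTheorem1:
  fixes a kinv m lam :: real and q0 :: "real \<Rightarrow> real" and psi2 dpsi2 :: "real \<Rightarrow> complex"
  assumes "a > 0" and "kinv \<ge> 0" and "m \<ge> 0"
    and "q0 \<in> borel_measurable (lebesgue_on {0..1})"
    and "\<exists>B. AE x in lebesgue_on {0..1}. \<bar>q0 x\<bar> \<le> B"
    and "AE x in lebesgue_on {0..1}. q0 x = q0 (1 - x)"
    and "lam \<notin> Sigma0 a (a * kinv) q0"
    and "is_sol a q0 lam psi2 dpsi2"
    and "psi2 0 - complex_of_real (a * kinv) * dpsi2 0 = 0"
    and "psi2 1 + complex_of_real (a * kinv) * dpsi2 1 = 1"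
  shows "dpsi2 0 \<noteq> 0 \<and>
    ((\<exists>th1\<in>{-pi..pi}. \<exists>th2\<in>{-pi..pi}. in_spec_theta a (a * kinv) m q0 th1 th2 lam) \<longleftrightarrow>
     (\<exists>th1\<in>{-pi..pi}. \<exists>th2\<in>{-pi..pi}. \<exists>s\<in>{1::real, -1}.
        dpsi2 1 / dpsi2 0 - complex_of_real (lam * m) / (3 * complex_of_real a * dpsi2 0)
          = complex_of_real (s * cmod (S th1 th2) / 3)))"
proof -
  let ?r = "complex_of_real (a * kinv)"
  obtain N1 where N1: "negligible N1" "\<forall>x\<in>{0..1}-N1. q0 x = q0 (1 - x)"
    using ae_to_negl[OF assms(6)] by blast
  obtain B where "AE x in lebesgue_on {0..1}. \<bar>q0 x\<bar> \<le> B" using assms(5) by blast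
  from ae_to_negl[OF this] obtain N2 where N2: "negligible N2" "\<forall>x\<in>{0..1}-N2. \<bar>q0 x\<bar> \<le> B" by blast
  define p1 where "p1 = (\<lambda>x. psi2 (1-x))"
  define dp1 where "dp1 = (\<lambda>x. - dpsi2 (1-x))"
  have s1: "is_sol a q0 lam p1 dp1" unfolding p1_def dp1_def by (rule reflect_sol[OF assms(8) N1])
  have b1: "p1 0 - ?r * dp1 0 = 1" "p1 1 + ?r * dp1 1 = 0" using assms(9,10) by (simp_all add: p1_def dp1_def)
  have dp1v: "dp1 0 = - dpsi2 1" "dp1 1 = - dpsi2 0" by (simp_all add: dp1_def)
  have d0: "dpsi2 0 \<noteq> 0"
  proof
    assume h: "dpsi2 0 = 0"
    then have "psi2 0 = 0" using assms(9) by simp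
    then have "\<forall>x\<in>{0..1}. psi2 x = 0 \<and> dpsi2 x = 0" using uniq[OF assms(1) assms(8) _ h N2] by blast
    then show False using assms(10) by auto
  qed
  have rep: "(\<forall>x\<in>{0..1}. u x = (u 0 - ?r*du 0) * p1 x + (u 1 + ?r * du 1) * psi2 x) \<and>
      du 0 = (u 0 - ?r*du 0) * dp1 0 + (u 1 + ?r * du 1) * dpsi2 0 \<and>
      du 1 = (u 0 - ?r*du 0) * dp1 1 + (u 1 + ?r * du 1) * dpsi2 1"
    if "is_sol a q0 lam u du" for u du
    using represent[OF assms(7) s1 b1 assms(8) assms(9) assms(10) that] by blast
  have a0: "complex_of_real a \<noteq> 0" using assms(1) by simp
  have main: "in_spec_theta a (a*kinv) m q0 th1 th2 lam \<longleftrightarrow> (\<exists>s\<in>{1::real,-1}.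
        dpsi2 1 / dpsi2 0 - complex_of_real (lam * m) / (3 * complex_of_real a * dpsi2 0)
          = complex_of_real (s * cmod (S th1 th2) / 3))" for th1 th2
  proof -
    define e1 where "e1 = exp (\<i> * complex_of_real th1)"
    define e2 where "e2 = exp (\<i> * complex_of_real th2)"
    define f1 where "f1 = exp (- \<i> * complex_of_real th1)"
    define f2 where "f2 = exp (- \<i> * complex_of_real th2)"
    have ef: "e1 * f1 = 1" "e2 * f2 = 1" unfolding e1_def e2_def f1_def f2_def
      by (simp_all add: exp_add[symmetric])
    define SS where "SS = S th1 th2"
    have SS: "SS = 1 + f1 + f2" unfolding SS_def S_def f1_def f2_def by simp
    have T: "cnj SS = 1 + e1 + e2" unfolding SS e1_def e2_def f1_def f2_def by (simp add: exp_cnj)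
    define A where "A = complex_of_real a * dpsi2 0"
    define P where "P = 3 * complex_of_real a * dpsi2 1 - complex_of_real (lam*m)"
    have A0: "A \<noteq> 0" using a0 d0 by (simp add: A_def)
    have eqv: "(dpsi2 1 / dpsi2 0 - complex_of_real (lam * m) / (3 * complex_of_real a * dpsi2 0)
          = complex_of_real (s * cmod SS / 3)) \<longleftrightarrow> P = of_real s * A * of_real (cmod SS)" for s
    proof -
      have D: "3 * complex_of_real a * dpsi2 0 \<noteq> 0" using a0 d0 by simp
      have L: "dpsi2 1 / dpsi2 0 - complex_of_real (lam * m) / (3 * complex_of_real a * dpsi2 0)
          = P / (3 * complex_of_real a * dpsi2 0)" unfolding P_def using a0 d0 by (simp add: field_simps)
      have R: "complex_of_real (s * cmod SS / 3) * (3 * complex_of_real a * dpsi2 0) = of_real s * A * of_real (cmod SS)"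
        unfolding A_def by simp
      show ?thesis unfolding L nonzero_divide_eq_eq[OF D] R ..
    qed
    have spec: "in_spec_theta a (a*kinv) m q0 th1 th2 lam \<longleftrightarrow>
        (\<exists>w0 w1. (w0\<noteq>0 \<or> w1\<noteq>0) \<and> P*w0 = A*SS*w1 \<and> P*w1 = A*cnj SS*w0)"
    proof
      assume "in_spec_theta a (a*kinv) m q0 th1 th2 lam"
      then obtain u1 du1 u2 du2 u3 du3 w0 w1 where
        sol: "is_sol a q0 lam u1 du1" "is_sol a q0 lam u2 du2" "is_sol a q0 lam u3 du3" and
        nt: "(\<exists>x\<in>{0..1}. u1 x \<noteq> 0 \<or> u2 x \<noteq> 0 \<or> u3 x \<noteq> 0) \<or> w0 \<noteq> 0 \<or> w1 \<noteq> 0" and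
        c0: "u1 0 - ?r * du1 0 = w0" "u2 0 - ?r * du2 0 = w0" "u3 0 - ?r * du3 0 = w0" and
        f0: "- complex_of_real a * (du1 0 + du2 0 + du3 0) = complex_of_real (lam * m) * w0" and
        c1: "u1 1 + ?r * du1 1 = w1" "e1 * (u2 1 + ?r * du2 1) = w1" "e2 * (u3 1 + ?r * du3 1) = w1" and
        f1: "complex_of_real a * (du1 1 + e1 * du2 1 + e2 * du3 1) = complex_of_real (lam * m) * w1"
        unfolding in_spec_theta_def apply -
        apply (elim exE conjE)
        by (rule that[unfolded e1_def e2_def]; assumption)
      have c1': "u2 1 + ?r * du2 1 = w1 * f1" "u3 1 + ?r * du3 1 = w1 * f2"
        using c1(2,3) ef by (metis mult.commute mult.left_neutral mult.assoc)+
      note R1 = rep[OF sol(1)] and R2 = rep[OF sol(2)] and R3 = rep[OF sol(3)]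
      have D1: "du1 0 = w0 * dp1 0 + w1 * dpsi2 0 \<and> du1 1 = w0 * dp1 1 + w1 * dpsi2 1"
        using conjunct2[OF R1] unfolding c0(1) c1(1) .
      have D2: "du2 0 = w0 * dp1 0 + (w1*f1) * dpsi2 0 \<and> du2 1 = w0 * dp1 1 + (w1*f1) * dpsi2 1"
        using conjunct2[OF R2] unfolding c0(2) c1'(1) .
      have D3: "du3 0 = w0 * dp1 0 + (w1*f2) * dpsi2 0 \<and> du3 1 = w0 * dp1 1 + (w1*f2) * dpsi2 1"
        using conjunct2[OF R3] unfolding c0(3) c1'(2) .
      have U1: "\<forall>x\<in>{0..1}. u1 x = w0 * p1 x + w1 * psi2 x"
        using conjunct1[OF R1] unfolding c0(1) c1(1) .
      have U2: "\<forall>x\<in>{0..1}. u2 x = w0 * p1 x + (w1*f1) * psi2 x"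
        using conjunct1[OF R2] unfolding c0(2) c1'(1) .
      have U3: "\<forall>x\<in>{0..1}. u3 x = w0 * p1 x + (w1*f2) * psi2 x"
        using conjunct1[OF R3] unfolding c0(3) c1'(2) .
      have "(-complex_of_real a*((-w0*dpsi2 1 + w1*dpsi2 0) + (-w0*dpsi2 1 + w1*f1*dpsi2 0) + (-w0*dpsi2 1 + w1*f2*dpsi2 0))
           = complex_of_real (lam * m)*w0)"
        using f0 D1 D2 D3 dp1v by (simp add: algebra_simps)
      then have E0: "P*w0 = A*SS*w1" unfolding alg0 P_def A_def SS by (simp add: algebra_simps)
      have "(complex_of_real a*((-w0*dpsi2 0 + w1*dpsi2 1) + e1*(-w0*dpsi2 0 + w1*f1*dpsi2 1) + e2*(-w0*dpsi2 0 + w1*f2*dpsi2 1))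
           = complex_of_real (lam * m)*w1)"
        using f1 D1 D2 D3 dp1v by (simp add: algebra_simps)
      then have E1: "P*w1 = A*cnj SS*w0" unfolding alg1[OF ef] P_def A_def T by (simp add: algebra_simps)
      have "w0 \<noteq> 0 \<or> w1 \<noteq> 0"
      proof (rule ccontr)
        assume "\<not> (w0 \<noteq> 0 \<or> w1 \<noteq> 0)"
        then have "w0 = 0" "w1 = 0" by auto
        then show False using nt U1 U2 U3 by auto
      qed
      then show "\<exists>w0 w1. (w0\<noteq>0 \<or> w1\<noteq>0) \<and> P*w0 = A*SS*w1 \<and> P*w1 = A*cnj SS*w0" using E0 E1 by blast
    next
      assume "\<exists>w0 w1. (w0\<noteq>0 \<or> w1\<noteq>0) \<and> P*w0 = A*SS*w1 \<and> P*w1 = A*cnj SS*w0"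
      then obtain w0 w1 where nz: "w0\<noteq>0 \<or> w1\<noteq>0" and E0: "P*w0 = A*SS*w1" and E1: "P*w1 = A*cnj SS*w0" by blast
      define u1 where "u1 = (\<lambda>x. w0 * p1 x + w1 * psi2 x)"
      define du1 where "du1 = (\<lambda>x. w0 * dp1 x + w1 * dpsi2 x)"
      define u2 where "u2 = (\<lambda>x. w0 * p1 x + (w1*f1) * psi2 x)"
      define du2 where "du2 = (\<lambda>x. w0 * dp1 x + (w1*f1) * dpsi2 x)"
      define u3 where "u3 = (\<lambda>x. w0 * p1 x + (w1*f2) * psi2 x)"
      define du3 where "du3 = (\<lambda>x. w0 * dp1 x + (w1*f2) * dpsi2 x)"
      have sol: "is_sol a q0 lam u1 du1" "is_sol a q0 lam u2 du2" "is_sol a q0 lam u3 du3"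
        unfolding u1_def du1_def u2_def du2_def u3_def du3_def
        by (rule is_sol_lin[OF s1 assms(8)])+
      have bc: "\<And>x y. w0 * p1 0 + y * psi2 0 - ?r * (w0 * dp1 0 + y * dpsi2 0) = w0"
               "\<And>y. w0 * p1 1 + y * psi2 1 + ?r * (w0 * dp1 1 + y * dpsi2 1) = y"
      proof -
        fix y
        have "w0 * p1 0 + y * psi2 0 - ?r * (w0 * dp1 0 + y * dpsi2 0) = w0 * (p1 0 - ?r * dp1 0) + y * (psi2 0 - ?r * dpsi2 0)"
          by (simp add: algebra_simps)
        then show "w0 * p1 0 + y * psi2 0 - ?r * (w0 * dp1 0 + y * dpsi2 0) = w0" using b1 assms(9) by simp
        have "w0 * p1 1 + y * psi2 1 + ?r * (w0 * dp1 1 + y * dpsi2 1) = w0 * (p1 1 + ?r * dp1 1) + y * (psi2 1 + ?r * dpsi2 1)"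
          by (simp add: algebra_simps)
        then show "w0 * p1 1 + y * psi2 1 + ?r * (w0 * dp1 1 + y * dpsi2 1) = y" using b1 assms(10) by simp
      qed
      have F0: "- complex_of_real a * (du1 0 + du2 0 + du3 0) = complex_of_real (lam * m) * w0"
      proof -
        have "(-complex_of_real a*((-w0*dpsi2 1 + w1*dpsi2 0) + (-w0*dpsi2 1 + w1*f1*dpsi2 0) + (-w0*dpsi2 1 + w1*f2*dpsi2 0))
           = complex_of_real (lam * m)*w0)"
          unfolding alg0 using E0 unfolding P_def A_def SS by (simp add: algebra_simps)
        then show ?thesis unfolding du1_def du2_def du3_def dp1v by (simp add: algebra_simps)
      qed
      have F1: "complex_of_real a * (du1 1 + e1 * du2 1 + e2 * du3 1) = complex_of_real (lam * m) * w1"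
      proof -
        have "(complex_of_real a*((-w0*dpsi2 0 + w1*dpsi2 1) + e1*(-w0*dpsi2 0 + w1*f1*dpsi2 1) + e2*(-w0*dpsi2 0 + w1*f2*dpsi2 1))
           = complex_of_real (lam * m)*w1)"
          unfolding alg1[OF ef] using E1 unfolding P_def A_def T by (simp add: algebra_simps)
        then show ?thesis unfolding du1_def du2_def du3_def dp1v by (simp add: algebra_simps)
      qed
      have C1: "e1 * (u2 1 + ?r * du2 1) = w1" "e2 * (u3 1 + ?r * du3 1) = w1"
        unfolding u2_def du2_def u3_def du3_def bc using ef by (simp_all add: algebra_simps)
      have C0: "u1 0 - ?r * du1 0 = w0" "u2 0 - ?r * du2 0 = w0" "u3 0 - ?r * du3 0 = w0"
        "u1 1 + ?r * du1 1 = w1"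
        unfolding u1_def du1_def u2_def du2_def u3_def du3_def bc by simp_all
      have nz': "(\<exists>x\<in>{0..1}. u1 x \<noteq> 0 \<or> u2 x \<noteq> 0 \<or> u3 x \<noteq> 0) \<or> w0 \<noteq> 0 \<or> w1 \<noteq> 0"
        using nz by blast
      show "in_spec_theta a (a*kinv) m q0 th1 th2 lam"
        unfolding in_spec_theta_def
        apply (rule exI[of _ u1], rule exI[of _ du1], rule exI[of _ u2], rule exI[of _ du2],
               rule exI[of _ u3], rule exI[of _ du3], rule exI[of _ w0], rule exI[of _ w1])
        apply (intro conjI)
        by (rule sol nz' C0 F0 C1[unfolded e1_def e2_def] F1[unfolded e1_def e2_def])+
    qed
    show ?thesis unfolding spec quad[OF A0] SS_def[symmetric] eqv by (rule refl)
  qed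
  show ?thesis using d0 main by blast
qed

end
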